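(* Let $G=HN$ be a finite non-Frobenius $2$-transitive affine group of degree $p^k$ ($p$ prime), with $N\cong\mathbb F_p^k$ and $H\le\mathrm{GL}_k(p)$ the stabiliser of $0$, and suppose $\mathrm{SL}_2(q)\trianglelefteq H$ where $q^2=p^k$ (acting naturally on $\mathbb F_q^2=\mathbb F_p^k$). Then $\kappa(G)=2$ if and only if $G\cong S_4$.
   Context: A derangement is an element fixing no point; $\kappa(G)$ is the number of conjugacy classes of derangements. A Frobenius group is a transitive non-regular group in which only the identity fixes more than one point. *)

theory Defs
  imports "HOL-Algebra.Algebra" "HOL-Library.Product_Plus"
begin

text \<open>The natural module V = F_q^2 of SL_2(q) is modelled as the type 'f \<times> 'f for a finite
field 'f with q elements; its additive group is the elementary abelian group F_p^k.\<close>

definition perm_grp :: "('v \<Rightarrow> 'v) set \<Rightarrow> ('v \<Rightarrow> 'v) monoid" where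
  "perm_grp S = \<lparr> carrier = S, monoid.mult = (\<circ>), one = id \<rparr>"

text \<open>GL_k(p): the F_p-linear (equivalently, additive) bijections of V = F_p^k.\<close>
definition GL_V :: "(('f::field \<times> 'f) \<Rightarrow> ('f \<times> 'f)) set" where
  "GL_V = {h. bij h \<and> (\<forall>u v. h (u + v) = h u + h v)}"

definition sl2_map :: "'f::field \<Rightarrow> 'f \<Rightarrow> 'f \<Rightarrow> 'f \<Rightarrow> ('f \<times> 'f) \<Rightarrow> ('f \<times> 'f)" where
  "sl2_map a b c d = (\<lambda>(x, y). (a * x + b * y, c * x + d * y))"

definition SL2 :: "(('f::field \<times> 'f) \<Rightarrow> ('f \<times> 'f)) set" where
  "SL2 = {sl2_map a b c d | a b c d. a * d - b * c = 1}"

definition affine_grp :: "(('f::field \<times> 'f) \<Rightarrow> ('f \<times> 'f)) set \<Rightarrow> (('f \<times> 'f) \<Rightarrow> ('f \<times> 'f)) set" where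
  "affine_grp H = {(\<lambda>v. h v + w) | h w. h \<in> H}"

definition transitive_on :: "('v \<Rightarrow> 'v) set \<Rightarrow> bool" where
  "transitive_on G = (\<forall>u v. \<exists>g\<in>G. g u = v)"

definition two_transitive :: "('v \<Rightarrow> 'v) set \<Rightarrow> bool" where
  "two_transitive G = (\<forall>u v u' v'. u \<noteq> v \<longrightarrow> u' \<noteq> v' \<longrightarrow> (\<exists>g\<in>G. g u = u' \<and> g v = v'))"

definition regular :: "('v \<Rightarrow> 'v) set \<Rightarrow> bool" where
  "regular G = (transitive_on G \<and> (\<forall>g\<in>G. \<forall>v. g v = v \<longrightarrow> g = id))"

definition frobenius :: "('v \<Rightarrow> 'v) set \<Rightarrow> bool" where
  "frobenius G = (transitive_on G \<and> \<not> regular G \<and>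
     (\<forall>g\<in>G. g \<noteq> id \<longrightarrow> card {v. g v = v} \<le> 1))"

definition derangement :: "('v \<Rightarrow> 'v) \<Rightarrow> bool" where
  "derangement g = (\<forall>v. g v \<noteq> v)"

definition conj_class :: "('v \<Rightarrow> 'v) set \<Rightarrow> ('v \<Rightarrow> 'v) \<Rightarrow> ('v \<Rightarrow> 'v) set" where
  "conj_class G g = {x \<circ> g \<circ> Hilbert_Choice.inv x | x. x \<in> G}"

definition kappa :: "('v \<Rightarrow> 'v) set \<Rightarrow> nat" where
  "kappa G = card {conj_class G g | g. g \<in> G \<and> derangement g}"

end

theory Submission
  imports Defs
begin

abbreviation hinv :: "('a \<Rightarrow> 'b) \<Rightarrow> ('b \<Rightarrow> 'a)" where "hinv \<equiv> Hilbert_Choice.inv"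

definition addf :: "('f::field \<times> 'f \<Rightarrow> 'f \<times> 'f) \<Rightarrow> bool" where
  "addf h = (\<forall>u v. h (u + v) = h u + h v)"

lemma addf_0: "addf h \<Longrightarrow> h 0 = 0"
  unfolding addf_def by (metis add_cancel_right_right add_0)
lemma addf_minus: "addf h \<Longrightarrow> h (- v) = - h v"
  unfolding addf_def by (metis add.right_inverse add_eq_0_iff addf_0 addf_def)
lemma addf_diff: "addf h \<Longrightarrow> h (u - v) = h u - h v"
  by (metis addf_def addf_minus diff_conv_add_uminus)
lemma addf_add: "addf h \<Longrightarrow> h (u + v) = h u + h v"
  unfolding addf_def by blast

lemma addf_inv: "addf h \<Longrightarrow> bij h \<Longrightarrow> addf (hinv h)"
  unfolding addf_def
  by (metis bij_inv_eq_iff)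

locale aff =
  fixes H :: "(('f::{field,finite} \<times> 'f) \<Rightarrow> ('f \<times> 'f)) set"
  assumes sub: "subgroup H (perm_grp GL_V)" and nor: "SL2 \<lhd> perm_grp H"
begin

lemma grpH: "group (perm_grp H)"
  using nor normal_def by blast

lemma H_GL: "h \<in> H \<Longrightarrow> bij h \<and> addf h"
  using subgroup.subset[OF sub] unfolding perm_grp_def GL_V_def addf_def by auto

lemma H_bij: "h \<in> H \<Longrightarrow> bij h" using H_GL by blast
lemma H_add: "h \<in> H \<Longrightarrow> addf h" using H_GL by blast

lemma SL2_H: "SL2 \<subseteq> H"
  using subgroup.subset[OF normal.axioms(1)[OF nor]] by (simp add: perm_grp_def)

lemma H_comp: "h \<in> H \<Longrightarrow> k \<in> H \<Longrightarrow> h \<circ> k \<in> H"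
  using monoid.m_closed[OF group.is_monoid[OF grpH], of h k] by (simp add: perm_grp_def)

lemma H_id: "id \<in> H"
  using monoid.one_closed[OF group.is_monoid[OF grpH]] by (simp add: perm_grp_def)

lemma H_ginv: "h \<in> H \<Longrightarrow> inv\<^bsub>perm_grp H\<^esub> h = hinv h"
proof -
  assume h: "h \<in> H"
  let ?i = "inv\<^bsub>perm_grp H\<^esub> h"
  have "?i \<otimes>\<^bsub>perm_grp H\<^esub> h = \<one>\<^bsub>perm_grp H\<^esub>" "h \<otimes>\<^bsub>perm_grp H\<^esub> ?i = \<one>\<^bsub>perm_grp H\<^esub>"
    using group.l_inv[OF grpH] group.r_inv[OF grpH] h by (auto simp: perm_grp_def)
  then have "?i \<circ> h = id" "h \<circ> ?i = id" by (auto simp: perm_grp_def)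
  then show ?thesis using inv_unique_comp by metis
qed

lemma H_inv: "h \<in> H \<Longrightarrow> hinv h \<in> H"
  using group.inv_closed[OF grpH, of h] H_ginv by (auto simp: perm_grp_def)

lemma norm1: "c \<in> H \<Longrightarrow> s \<in> SL2 \<Longrightarrow> c \<circ> s \<circ> hinv c \<in> SL2"
  using normal.inv_op_closed2[OF nor, of c s] H_ginv by (auto simp: perm_grp_def)

lemma norm2: "c \<in> H \<Longrightarrow> s \<in> SL2 \<Longrightarrow> hinv c \<circ> s \<circ> c \<in> SL2"
  using norm1[of "hinv c" s] H_inv H_bij by (simp add: inv_inv_eq)


end

definition smul :: "'f::field \<Rightarrow> 'f \<times> 'f \<Rightarrow> 'f \<times> 'f" where
  "smul l v = (l * fst v, l * snd v)"

definition mat :: "('f::field \<times> 'f \<Rightarrow> 'f \<times> 'f) \<Rightarrow> bool" where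
  "mat f = (\<exists>a b c d. f = sl2_map a b c d)"

lemma sl2_app: "sl2_map a b c d (x, y) = (a * x + b * y, c * x + d * y)"
  by (simp add: sl2_map_def)

lemma mat_add: "mat f \<Longrightarrow> f (u + v) = f u + f v"
  unfolding mat_def sl2_map_def by (cases u; cases v) (auto simp: algebra_simps)
lemma mat_diff: "mat f \<Longrightarrow> f (u - v) = f u - f v"
  unfolding mat_def sl2_map_def by (cases u; cases v) (auto simp: algebra_simps)
lemma mat_smul: "mat f \<Longrightarrow> f (smul l v) = smul l (f v)"
  unfolding mat_def sl2_map_def smul_def by (cases v) (auto simp: algebra_simps)

lemma SL2_mat: "s \<in> SL2 \<Longrightarrow> mat s"
  unfolding SL2_def mat_def by blast

lemma sl2_in: "a * d - b * c = 1 \<Longrightarrow> sl2_map a b c d \<in> SL2"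
  unfolding SL2_def by blast

lemma scal:
  fixes f :: "'f::field \<times> 'f \<Rightarrow> 'f \<times> 'f"
  assumes a: "\<And>u v. f (u + v) = f u + f v" and s: "\<And>l v. f (smul l v) = smul l (f v)"
    and x: "\<And>v. f (sl2_map 1 1 0 1 v) = sl2_map 1 1 0 1 (f v)"
    and y: "\<And>v. f (sl2_map 1 0 1 1 v) = sl2_map 1 0 1 1 (f v)"
  shows "f v = smul (fst (f (1,0))) v"
proof -
  obtain a1 c1 where e1: "f (1,0) = (a1, c1)" by fastforce
  obtain b1 d1 where e2: "f (0,1) = (b1, d1)" by fastforce
  have "f (1,1) = f (1,0) + f (0,1)" using a[of "(1,0)" "(0,1)"] by simp
  then have f11: "f (1,1) = (a1 + b1, c1 + d1)" using e1 e2 by simp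
  have "f (1,1) = sl2_map 1 1 0 1 (f (0,1))" using x[of "(0,1)"] by (simp add: sl2_app)
  then have h1: "a1 = d1" "c1 = 0" using f11 e2 by (auto simp: sl2_app)
  have "f (1,1) = sl2_map 1 0 1 1 (f (1,0))" using y[of "(1,0)"] by (simp add: sl2_app)
  then have h2: "b1 = 0" using f11 e1 h1 by (auto simp: sl2_app)
  obtain p q where v: "v = (p, q)" by fastforce
  have "v = smul p (1,0) + smul q (0,1)" using v by (simp add: smul_def)
  then have "f v = smul p (f (1,0)) + smul q (f (0,1))" using a s by metis
  then show ?thesis using e1 e2 h1 h2 v by (simp add: smul_def)
qed

context aff begin

lemma conj_mat: "c \<in> H \<Longrightarrow> s \<in> SL2 \<Longrightarrow> \<exists>M. mat M \<and> (\<forall>z. c (s z) = M (c z))"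
proof -
  assume c: "c \<in> H" and s: "s \<in> SL2"
  let ?M = "c \<circ> s \<circ> hinv c"
  have "mat ?M" using norm1[OF c s] SL2_mat by blast
  moreover have "c (s z) = ?M (c z)" for z
    using H_bij[OF c] by (simp add: bij_is_inj)
  ultimately show ?thesis by blast
qed

lemma smul_decomp: "smul l z = (sl2_map 1 l 0 1 w1 - w1) + (sl2_map 1 0 l 1 w2 - w2)"
  if "w1 = sl2_map 1 0 1 1 z - z" "w2 = sl2_map 1 1 0 1 z - z" for z :: "'f \<times> 'f"
  using that by (cases z) (simp add: smul_def sl2_app)

lemma Phi_expr:
  assumes c: "c \<in> H"
  shows "\<exists>F. (\<forall>u v. F (u + v) = F u + F v) \<and> (\<forall>m v. F (smul m v) = smul m (F v))
              \<and> (\<forall>z. c (smul l z) = F (c z))"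
proof -
  have ad: "addf c" using H_add[OF c] .
  obtain X1 where X1: "mat X1" "\<And>z. c (sl2_map 1 1 0 1 z) = X1 (c z)"
    using conj_mat[OF c sl2_in[of 1 1 1 0]] by auto
  obtain Y1 where Y1: "mat Y1" "\<And>z. c (sl2_map 1 0 1 1 z) = Y1 (c z)"
    using conj_mat[OF c sl2_in[of 1 1 0 1]] by auto
  obtain Xl where Xl: "mat Xl" "\<And>z. c (sl2_map 1 l 0 1 z) = Xl (c z)"
    using conj_mat[OF c sl2_in[of 1 1 l 0]] by auto
  obtain Yl where Yl: "mat Yl" "\<And>z. c (sl2_map 1 0 l 1 z) = Yl (c z)"
    using conj_mat[OF c sl2_in[of 1 1 0 l]] by auto
  define F where "F v = (Xl (Y1 v - v) - (Y1 v - v)) + (Yl (X1 v - v) - (X1 v - v))" for v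
  have "c (smul l z) = F (c z)" for z
  proof -
    define w1 where "w1 = sl2_map 1 0 1 1 z - z"
    define w2 where "w2 = sl2_map 1 1 0 1 z - z"
    have "c (smul l z) = (c (sl2_map 1 l 0 1 w1) - c w1) + (c (sl2_map 1 0 l 1 w2) - c w2)"
      using smul_decomp[OF w1_def w2_def] ad by (simp add: addf_add addf_diff)
    also have "\<dots> = (Xl (c w1) - c w1) + (Yl (c w2) - c w2)" using Xl Yl by simp
    also have "c w1 = Y1 (c z) - c z" unfolding w1_def using ad Y1 by (simp add: addf_diff)
    also have "c w2 = X1 (c z) - c z" unfolding w2_def using ad X1 by (simp add: addf_diff)
    finally show ?thesis unfolding F_def .
  qed
  moreover have "F (u + v) = F u + F v" for u v
    unfolding F_def using X1 Y1 Xl Yl by (simp add: mat_add mat_diff algebra_simps)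
  moreover have "F (smul m v) = smul m (F v)" for m v
  proof -
    have sd: "smul m (a - b) = smul m a - smul m b" "smul m (a + b) = smul m a + smul m b" for a b :: "'f \<times> 'f"
      by (simp_all add: smul_def algebra_simps)
    show ?thesis unfolding F_def using X1 Y1 Xl Yl by (simp add: mat_smul mat_diff sd)
  qed
  ultimately show ?thesis by blast
qed

lemma semilin:
  assumes c: "c \<in> H"
  shows "\<exists>k. \<forall>w. c (smul l w) = smul k (c w)"
proof -
  obtain F where F: "\<And>u v. F (u + v) = F u + F v" "\<And>m v. F (smul m v) = smul m (F v)"
      "\<And>z. c (smul l z) = F (c z)" using Phi_expr[OF c] by blast
  have bc: "bij c" using H_bij[OF c] .
  have comm: "F (S v) = S (F v)" if S: "S \<in> SL2" for S v
  proof -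
    obtain T where T: "mat T" "\<And>z. hinv c (S z) = T (hinv c z)"
      using conj_mat[OF H_inv[OF c] S] by blast
    have cT: "c (T z) = S (c z)" for z
      using T(2)[of "c z"] bc by (metis bij_inv_eq_iff)
    have "F (S v) = c (smul l (hinv c (S v)))" using F(3)[of "hinv c (S v)"] bc
      by (simp add: bij_is_surj surj_f_inv_f)
    also have "\<dots> = c (smul l (T (hinv c v)))" using T by simp
    also have "\<dots> = c (T (smul l (hinv c v)))" using T(1) by (simp add: mat_smul)
    also have "\<dots> = S (c (smul l (hinv c v)))" using cT by simp
    also have "\<dots> = S (F v)" using F(3)[of "hinv c v"] bc by (simp add: bij_is_surj surj_f_inv_f)
    finally show ?thesis .
  qed
  have "F v = smul (fst (F (1,0))) v" for v
    by (rule scal) (use F comm sl2_in[of 1 1 1 0] sl2_in[of 1 1 0 1] in auto)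
  then show ?thesis using F(3) by metis
qed


end
context aff begin
lemma semilin2:
  assumes c: "c \<in> H"
  shows "\<exists>\<phi>. (\<forall>l w. c (smul l w) = smul (\<phi> l) (c w)) \<and> \<phi> 1 = 1 \<and> \<phi> 0 = 0
             \<and> (\<forall>a b. \<phi> (a + b) = \<phi> a + \<phi> b)"
proof -
  have "\<forall>l. \<exists>k. \<forall>w. c (smul l w) = smul k (c w)" using semilin[OF c] by blast
  then obtain \<phi> where ph: "\<And>l w. c (smul l w) = smul (\<phi> l) (c w)" by metis
  have bc: "bij c" and ad: "addf c" using H_GL[OF c] by auto
  define w0 where "w0 = hinv c (1, 0)"
  have cw0: "c w0 = (1,0)" unfolding w0_def using bc by (simp add: bij_is_surj surj_f_inv_f)
  have "smul (\<phi> 1) (1,0) = (1::'f, 0::'f)" using ph[of 1 w0] cw0 by (simp add: smul_def)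
  then have p1: "\<phi> 1 = 1" by (simp add: smul_def)
  have pa: "\<phi> (a + b) = \<phi> a + \<phi> b" for a b
  proof -
    have "smul (a + b) w0 = smul a w0 + smul b w0" by (simp add: smul_def algebra_simps)
    then have "c (smul (a+b) w0) = c (smul a w0) + c (smul b w0)" using ad by (simp add: addf_add)
    then show ?thesis using ph cw0 by (simp add: smul_def)
  qed
  have "\<phi> 0 = 0" using pa[of 0 0] by (metis add.right_neutral add_left_cancel)
  then show ?thesis using ph p1 pa by blast
qed

definition G where "G = affine_grp H"

lemma G_mem: "h \<in> H \<Longrightarrow> (\<lambda>v. h v + w) \<in> G"
  unfolding G_def affine_grp_def by blast

lemma G_form: "f \<in> G \<Longrightarrow> \<exists>h w. h \<in> H \<and> f = (\<lambda>v. h v + w)"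
  unfolding G_def affine_grp_def by blast

lemma G_id: "id \<in> G"
  using G_mem[OF H_id, of 0] by (simp add: id_def)

lemma G_bij: "f \<in> G \<Longrightarrow> bij f"
proof -
  assume "f \<in> G"
  then obtain h w where h: "h \<in> H" and f: "f = (\<lambda>v. h v + w)" using G_form by blast
  have "(\<lambda>v. v - w) \<circ> (\<lambda>v. v + w) = id" "(\<lambda>v. v + w) \<circ> (\<lambda>v. v - w) = id"
    by (simp_all add: fun_eq_iff)
  then have "bij (\<lambda>v. v + w)" by (rule o_bij)
  then have "bij ((\<lambda>v. v + w) \<circ> h)" using H_bij[OF h] bij_comp by blast
  then show ?thesis unfolding f by (simp add: o_def)
qed

lemma G_comp: "f \<in> G \<Longrightarrow> g \<in> G \<Longrightarrow> f \<circ> g \<in> G"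
proof -
  assume "f \<in> G" "g \<in> G"
  then obtain h w h' w' where h: "h \<in> H" "h' \<in> H" and f: "f = (\<lambda>v. h v + w)" "g = (\<lambda>v. h' v + w')"
    using G_form by metis
  have "f \<circ> g = (\<lambda>v. (h \<circ> h') v + (h w' + w))"
  proof
    fix v
    have "(f \<circ> g) v = h (h' v + w') + w" using f by simp
    also have "\<dots> = (h (h' v) + h w') + w" using addf_add[OF H_add[OF h(1)]] by simp
    finally show "(f \<circ> g) v = (h \<circ> h') v + (h w' + w)" by (simp add: add.assoc)
  qed
  then show ?thesis using G_mem H_comp h by metis
qed

lemma G_inv: "f \<in> G \<Longrightarrow> hinv f \<in> G"
proof -
  assume fG: "f \<in> G"
  then obtain h w where h: "h \<in> H" and f: "f = (\<lambda>v. h v + w)" using G_form by blast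
  have bh: "bij h" and ah: "addf h" using H_GL[OF h] by auto
  have ai: "addf (hinv h)" using addf_inv[OF ah bh] .
  have hi: "h (hinv h y) = y" for y using bh by (simp add: bij_is_surj surj_f_inv_f)
  have ih: "hinv h (h y) = y" for y using bh by (simp add: bij_is_inj)
  define g where "g = (\<lambda>v. hinv h v - hinv h w)"
  have fg: "f \<circ> g = id"
  proof
    fix v
    have "(f \<circ> g) v = h (hinv h v - hinv h w) + w" unfolding f g_def by simp
    also have "\<dots> = (h (hinv h v) - h (hinv h w)) + w" using addf_diff[OF ah] by simp
    also have "\<dots> = (v - w) + w" using hi by simp
    finally show "(f \<circ> g) v = id v" by simp
  qed
  have gf: "g \<circ> f = id"
  proof
    fix v
    have "(g \<circ> f) v = hinv h (h v + w) - hinv h w" unfolding f g_def by simp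
    also have "\<dots> = (hinv h (h v) + hinv h w) - hinv h w" using addf_add[OF ai] by simp
    finally show "(g \<circ> f) v = id v" using ih by simp
  qed
  have "hinv f = g" using inv_unique_comp[OF fg gf] .
  moreover have "g = (\<lambda>v. hinv h v + (- hinv h w))" unfolding g_def by (simp add: fun_eq_iff)
  then have "g \<in> G" by (simp only:) (rule G_mem[OF H_inv[OF h]])
  ultimately show ?thesis by simp
qed

lemma self_conj: "f \<in> G \<Longrightarrow> f \<in> conj_class G f"
proof -
  assume f: "f \<in> G"
  have "f = id \<circ> f \<circ> hinv id" by (simp add: inv_id)
  then show ?thesis unfolding conj_class_def using G_id by blast
qed

lemma conj_eqn: assumes "f \<in> conj_class G g" shows "\<exists>a\<in>G. f \<circ> a = a \<circ> g"
proof -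
  obtain a where a: "a \<in> G" "f = a \<circ> g \<circ> hinv a" using assms unfolding conj_class_def by blast
  have ia: "hinv a (a y) = y" for y using G_bij[OF a(1)] by (simp add: bij_is_inj)
  have "f \<circ> a = a \<circ> g" by (rule ext) (simp add: a(2) ia)
  then show ?thesis using a by blast
qed

lemma conj_intro: assumes "a \<in> G" "f \<circ> a = a \<circ> g" shows "f \<in> conj_class G g"
proof -
  have ai: "a (hinv a y) = y" for y using G_bij[OF assms(1)] by (simp add: bij_is_surj surj_f_inv_f)
  have "f = a \<circ> g \<circ> hinv a"
  proof
    fix y
    have "f y = f (a (hinv a y))" using ai by simp
    also have "\<dots> = a (g (hinv a y))" using assms(2) by (metis comp_apply)
    finally show "f y = (a \<circ> g \<circ> hinv a) y" by simp
  qed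
  then show ?thesis unfolding conj_class_def using assms(1) by blast
qed

lemma conj_trans: assumes "f \<in> conj_class G g" "g \<in> G"
  shows "conj_class G f = conj_class G g"
proof -
  obtain a where a: "a \<in> G" "f \<circ> a = a \<circ> g" using conj_eqn[OF assms(1)] by blast
  have ai: "a (hinv a y) = y" for y using G_bij[OF a(1)] by (simp add: bij_is_surj surj_f_inv_f)
  have ia: "hinv a (a y) = y" for y using G_bij[OF a(1)] by (simp add: bij_is_inj)
  show ?thesis
  proof
    show "conj_class G f \<subseteq> conj_class G g"
    proof
      fix k assume "k \<in> conj_class G f"
      then obtain x where x: "x \<in> G" "k \<circ> x = x \<circ> f" using conj_eqn by blast
      have "k \<circ> (x \<circ> a) = (x \<circ> a) \<circ> g"
      proof
        fix v show "(k \<circ> (x \<circ> a)) v = (x \<circ> a \<circ> g) v"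
          using fun_cong[OF x(2), of "a v"] fun_cong[OF a(2), of v] by simp
      qed
      then show "k \<in> conj_class G g" using conj_intro G_comp[OF x(1) a(1)] by blast
    qed
  next
    show "conj_class G g \<subseteq> conj_class G f"
    proof
      fix k assume "k \<in> conj_class G g"
      then obtain x where x: "x \<in> G" "k \<circ> x = x \<circ> g" using conj_eqn by blast
      have "k \<circ> (x \<circ> hinv a) = (x \<circ> hinv a) \<circ> f"
      proof
        fix v
        have "f v = a (g (hinv a v))" using fun_cong[OF a(2), of "hinv a v"] ai by simp
        then have "hinv a (f v) = g (hinv a v)" using ia by simp
        then show "(k \<circ> (x \<circ> hinv a)) v = (x \<circ> hinv a \<circ> f) v"
          using fun_cong[OF x(2), of "hinv a v"] by simp
      qed
      then show "k \<in> conj_class G f" using conj_intro G_comp[OF x(1) G_inv[OF a(1)]] by blast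
    qed
  qed
qed

end

definition lin :: "('f::field \<times> 'f \<Rightarrow> 'f \<times> 'f) \<Rightarrow> 'f \<times> 'f \<Rightarrow> 'f \<times> 'f" where
  "lin f v = f v - f 0"

lemma lin_aff: "addf h \<Longrightarrow> lin (\<lambda>v. h v + w) = h"
  by (simp add: lin_def addf_0 fun_eq_iff)

lemma lin_conj:
  assumes "f \<circ> a = a \<circ> g" "a = (\<lambda>v. c v + u)" "addf c" "bij c" "g = (\<lambda>v. h v + w)" "addf h"
  shows "lin f x = c (h (hinv c x))"
proof -
  have e: "f (c v + u) = c (h v + w) + u" for v using assms(1,2,5) by (metis comp_apply)
  have ci: "c (hinv c y) = y" for y using assms(4) by (simp add: bij_is_surj surj_f_inv_f)
  have "f x = c (h (hinv c (x - u)) + w) + u" using e[of "hinv c (x - u)"] ci by simp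
  moreover have "f 0 = c (h (hinv c (- u)) + w) + u" using e[of "hinv c (- u)"] ci by simp
  ultimately have "lin f x = c (h (hinv c (x - u))) - c (h (hinv c (- u)))"
    using assms(3) by (simp add: lin_def addf_add)
  also have "\<dots> = c (h (hinv c (x - u) - hinv c (- u)))" using assms(3,6) by (simp add: addf_diff)
  also have "hinv c (x - u) - hinv c (- u) = hinv c x"
    using addf_inv[OF assms(3,4)] by (metis addf_diff diff_minus_eq_add diff_add_cancel)
  finally show ?thesis .
qed

definition nil2 :: "('f::field \<times> 'f \<Rightarrow> 'f \<times> 'f) \<Rightarrow> bool" where
  "nil2 l = (\<forall>v. l (l v - v) - (l v - v) = 0)"

lemma nil2_conj: assumes "addf c" "bij c" "nil2 h" shows "nil2 (\<lambda>x. c (h (hinv c x)))"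
proof -
  have ci: "c (hinv c y) = y" for y using assms(2) by (simp add: bij_is_surj surj_f_inv_f)
  have ic: "hinv c (c y) = y" for y using assms(2) by (simp add: bij_is_inj)
  show ?thesis unfolding nil2_def
  proof
    fix v
    let ?z = "hinv c v"
    have "c (h (hinv c (c (h ?z) - v))) - (c (h ?z) - v) = c (h (h ?z - ?z)) - c (h ?z - ?z)"
      using assms(1) addf_inv[OF assms(1,2)] ci ic by (simp add: addf_diff)
    also have "\<dots> = c (h (h ?z - ?z) - (h ?z - ?z))" using assms(1) by (simp add: addf_diff)
    also have "h (h ?z - ?z) - (h ?z - ?z) = 0" using assms(3) unfolding nil2_def by blast
    also have "c 0 = 0" using assms(1) by (rule addf_0)
    finally show "c (h (hinv c (c (h (hinv c v)) - v))) - (c (h (hinv c v)) - v) = 0" .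
  qed
qed

definition dt :: "('f::field \<times> 'f \<Rightarrow> 'f \<times> 'f) \<Rightarrow> 'f" where
  "dt c = fst (c (1,0)) * snd (c (0,1)) - fst (c (0,1)) * snd (c (1,0))"

lemma sl2_zero[simp]: "sl2_map a b c d 0 = 0"
  by (simp add: sl2_map_def zero_prod_def)

lemma nil2_id: "nil2 id" by (simp add: nil2_def)

lemma nil2_t: "nil2 (sl2_map 1 b 0 1)" by (simp add: nil2_def sl2_map_def split: prod.splits)

lemma mat_addf: "mat f \<Longrightarrow> addf f" by (simp add: addf_def mat_add)

lemma ring_n1: "(\<delta>::'f::field) = m11*m22 - m12*m21 \<Longrightarrow> (m22 - b*m21)*(px*m11 + py*m12) + (b*m11 - m12)*(px*m21 + py*m22) = \<delta>*(px + b*py)"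
  by Groebner_Basis.algebra
lemma ring_n2: "(\<delta>::'f::field) = m11*m22 - m12*m21 \<Longrightarrow> (-m21)*(px*m11+py*m12) + m11*(px*m21+py*m22) = \<delta>*py"
  by Groebner_Basis.algebra

lemma mat_sl2: "mat (sl2_map a b c d)" unfolding mat_def by blast
lemma addf_sl2: "addf (sl2_map a b c d)" by (rule mat_addf[OF mat_sl2])

lemma exists_w:
  fixes h :: "'f::{field,finite} \<times> 'f \<Rightarrow> 'f \<times> 'f"
  assumes "addf h" "h e = e" "e \<noteq> 0"
  shows "\<exists>w. \<forall>v. h v + w \<noteq> v"
proof -
  define k where "k v = h v - v" for v
  have "k e = 0" "k 0 = 0" using assms(2) addf_0[OF assms(1)] by (simp_all add: k_def)
  then have "\<not> inj k" using assms(3) unfolding inj_def by metis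
  then have "\<not> surj k" using finite_UNIV_surj_inj[of k] by auto
  then obtain w where w: "w \<notin> range k" by auto
  have "h v + w \<noteq> v" for v
  proof
    assume eq: "h v + w = v"
    have "k (- v) = v - h v" unfolding k_def using addf_minus[OF assms(1)] by simp
    also have "\<dots> = w" using eq by (metis add_diff_cancel_left')
    finally show False using w by (metis rangeI)
  qed
  then show ?thesis by blast
qed

context aff begin

lemma class_transl: assumes "x \<in> conj_class G (\<lambda>v. v + w)" shows "lin x = id"
proof -
  obtain a where a: "a \<in> G" "x \<circ> a = a \<circ> (\<lambda>v. v + w)" using conj_eqn[OF assms] by blast
  obtain c u where c: "c \<in> H" "a = (\<lambda>v. c v + u)" using G_form[OF a(1)] by blast
  have "lin x z = c (id (hinv c z))" for z
    by (rule lin_conj[OF a(2) c(2) H_add[OF c(1)] H_bij[OF c(1)]]) (auto simp: addf_def)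
  then show ?thesis using H_bij[OF c(1)] by (auto simp: bij_is_surj surj_f_inv_f)
qed

lemma class_nil2: assumes "x \<in> conj_class G (\<lambda>v. h v + w)" "addf h" "nil2 h" shows "nil2 (lin x)"
proof -
  obtain a where a: "a \<in> G" "x \<circ> a = a \<circ> (\<lambda>v. h v + w)" using conj_eqn[OF assms(1)] by blast
  obtain c u where c: "c \<in> H" "a = (\<lambda>v. c v + u)" using G_form[OF a(1)] by blast
  have "lin x = (\<lambda>z. c (h (hinv c z)))"
    using lin_conj[OF a(2) c(2) H_add[OF c(1)] H_bij[OF c(1)] refl assms(2)] by blast
  then show ?thesis using nil2_conj[OF H_add[OF c(1)] H_bij[OF c(1)] assms(3)] by simp
qed

lemma class_ne: assumes "f \<in> G" "\<And>x. x \<in> conj_class G g \<Longrightarrow> P x" "\<not> P f"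
  shows "conj_class G f \<noteq> conj_class G g"
  using self_conj[OF assms(1)] assms(2,3) by blast

lemma class_b:
  assumes "(\<lambda>v. sl2_map 1 \<beta> 0 1 v + (0, l)) \<in> conj_class G (\<lambda>v. sl2_map 1 1 0 1 v + (0, 1))"
  shows "\<exists>c\<in>H. dt c = \<beta> * l * l"
proof -
  let ?T = "sl2_map 1 \<beta> 0 1" and ?t = "sl2_map (1::'f) 1 0 1"
  obtain a where a: "a \<in> G" "(\<lambda>v. ?T v + (0, l)) \<circ> a = a \<circ> (\<lambda>v. ?t v + (0, 1))"
    using conj_eqn[OF assms] by blast
  obtain c u where c: "c \<in> H" "a = (\<lambda>v. c v + u)" using G_form[OF a(1)] by blast
  have ad: "addf c" using H_add[OF c(1)] .
  have e: "?T (c v + u) + (0, l) = c (?t v + (0,1)) + u" for v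
    using fun_cong[OF a(2), of v] c(2) by simp
  obtain p r where cp: "c (1,0) = (p, r)" by fastforce
  obtain m n where cm: "c (0,1) = (m, n)" by fastforce
  obtain u1 u2 where uu: "u = (u1, u2)" by fastforce
  have e0: "?T u + (0, l) = (m, n) + u" using e[of 0] cm addf_0[OF ad] by (simp add: sl2_app)
  have "?t (0,1) + (0,1) = (1,0) + ((0,1) + (0,1))" by (simp add: sl2_app)
  then have "c (?t (0,1) + (0,1)) = (p, r) + ((m, n) + (m, n))"
    using addf_add[OF ad] cp cm by metis
  moreover have "?T (c (0,1) + u) = ?T (m, n) + ?T u" using cm uu by (simp add: sl2_app algebra_simps)
  ultimately have e1: "?T (m, n) + ?T u + (0, l) = (p, r) + ((m, n) + (m, n)) + u"
    using e[of "(0,1)"] by (simp add: algebra_simps)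
  from e0 uu have E0: "u1 + \<beta> * u2 = m + u1" "u2 + l = n + u2" by (auto simp: sl2_app)
  from e1 uu have E1: "m + \<beta> * n + (u1 + \<beta> * u2) = p + (m + m) + u1" "n + u2 + l = r + (n + n) + u2"
    by (auto simp: sl2_app)
  from E0(2) have nl: "l = n" by simp
  from E0(1) have m: "m = \<beta> * u2" by simp
  have "\<beta> * n + (m + m + u1) = m + \<beta> * n + (u1 + \<beta> * u2)" using m by (simp add: ac_simps)
  also have "\<dots> = p + (m + m + u1)" using E1(1) by (simp add: ac_simps)
  finally have "\<beta> * n = p" by simp
  then have p: "p = \<beta> * l" using nl by simp
  from E1(2) have "r + (n + u2 + l) = 0 + (n + u2 + l)" using nl by (simp add: ac_simps)
  then have r: "r = 0" by simp
  have "dt c = p * n - m * r" using cp cm by (simp add: dt_def)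
  then show ?thesis using p r E0 c(1) by (metis add_left_cancel add.commute diff_zero mult_zero_right mult.assoc)
qed

lemma case_a:
  assumes c: "c \<in> H" "dt c \<noteq> 0" "dt c \<noteq> 1"
  shows "\<exists>h\<in>H. addf h \<and> h (1,0) = (1,0) \<and> \<not> nil2 h"
proof -
  obtain \<phi> where ph: "\<And>l w. c (smul l w) = smul (\<phi> l) (c w)" "\<phi> 1 = 1" "\<phi> 0 = 0"
      "\<And>a b. \<phi> (a + b) = \<phi> a + \<phi> b" using semilin2[OF c(1)] by blast
  have ad: "addf c" using H_add[OF c(1)] .
  obtain m11 m21 where c1: "c (1,0) = (m11, m21)" by fastforce
  obtain m12 m22 where c2: "c (0,1) = (m12, m22)" by fastforce
  define \<delta> where "\<delta> = dt c"
  have dl: "\<delta> = m11 * m22 - m12 * m21" unfolding \<delta>_def dt_def using c1 c2 by simp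
  have d0: "\<delta> \<noteq> 0" "\<delta> \<noteq> 1" using c unfolding \<delta>_def by auto
  have cf: "c (x, y) = (\<phi> x * m11 + \<phi> y * m12, \<phi> x * m21 + \<phi> y * m22)" for x y
  proof -
    have "(x, y) = smul x (1,0) + smul y (0,1)" by (simp add: smul_def)
    then have "c (x, y) = c (smul x (1,0)) + c (smul y (0,1))" using addf_add[OF ad] by metis
    then show ?thesis using ph(1)[of x "(1,0)"] ph(1)[of y "(0,1)"] c1 c2 by (simp add: smul_def algebra_simps)
  qed
  have key: "\<exists>S\<in>SL2. \<forall>x y. S (c (x, y)) = (\<phi> x + b * \<phi> y, \<delta> * \<phi> y)" for b
  proof -
    define S where "S = sl2_map ((m22 - b * m21) / \<delta>) ((b * m11 - m12) / \<delta>) (- m21) m11"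
    have num: "(m22 - b * m21) * m11 - (b * m11 - m12) * (- m21) = \<delta>" using dl by (simp add: algebra_simps)
    have "(m22 - b * m21) / \<delta> * m11 - (b * m11 - m12) / \<delta> * (- m21)
        = ((m22 - b * m21) * m11 - (b * m11 - m12) * (- m21)) / \<delta>" using d0(1) by (simp add: field_simps)
    also have "\<dots> = 1" using num d0(1) by simp
    finally have "(m22 - b * m21) / \<delta> * m11 - (b * m11 - m12) / \<delta> * (- m21) = 1" .
    then have "S \<in> SL2" unfolding S_def by (rule sl2_in)
    moreover have "S (c (x, y)) = (\<phi> x + b * \<phi> y, \<delta> * \<phi> y)" for x y
    proof -
      let ?P = "\<phi> x * m11 + \<phi> y * m12" and ?Q = "\<phi> x * m21 + \<phi> y * m22"
      have n1: "(m22 - b*m21) * ?P + (b*m11 - m12) * ?Q = \<delta> * (\<phi> x + b * \<phi> y)" by (rule ring_n1[OF dl])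
      have n2: "(-m21) * ?P + m11 * ?Q = \<delta> * \<phi> y" by (rule ring_n2[OF dl])
      have "S (c (x, y)) = ((m22 - b * m21) / \<delta> * ?P + (b * m11 - m12) / \<delta> * ?Q, (-m21) * ?P + m11 * ?Q)"
        unfolding S_def cf sl2_app by simp
      also have "(m22 - b * m21) / \<delta> * ?P + (b * m11 - m12) / \<delta> * ?Q
          = ((m22 - b*m21) * ?P + (b*m11 - m12) * ?Q) / \<delta>" by (simp add: add_divide_distrib)
      finally show ?thesis using n1 n2 d0(1) by simp
    qed
    ultimately show ?thesis by blast
  qed
  have pd: "\<phi> (\<delta> - 1) = \<phi> \<delta> - 1" using ph(4)[of "\<delta> - 1" 1] ph(2) by (simp add: algebra_simps)
  define E where "E = \<delta> * (\<phi> \<delta> - 1) - (\<delta> - 1)"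
  define b where "b = (if E \<noteq> 0 then 0 else (1::'f))"
  have bb: "\<phi> b + b * (\<phi> \<delta> - 1) - b \<noteq> 0 \<or> E \<noteq> 0"
  proof (cases "E = 0")
    case True
    then have b1: "b = 1" by (simp add: b_def)
    show ?thesis
    proof (rule disjI1)
      show "\<phi> b + b * (\<phi> \<delta> - 1) - b \<noteq> 0"
      proof
        assume "\<phi> b + b * (\<phi> \<delta> - 1) - b = 0"
        then have "\<phi> \<delta> = 1" using b1 ph(2) by (simp add: algebra_simps)
        then have "E = 1 - \<delta>" by (simp add: E_def)
        then show False using True d0 by simp
      qed
    qed
  qed simp
  obtain S where S: "S \<in> SL2" "\<And>x y. S (c (x, y)) = (\<phi> x + b * \<phi> y, \<delta> * \<phi> y)" using key by blast
  define h where "h = S \<circ> c"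
  have hH: "h \<in> H" unfolding h_def using H_comp SL2_H S(1) c(1) by blast
  have hv: "h (x, y) = (\<phi> x + b * \<phi> y, \<delta> * \<phi> y)" for x y unfolding h_def using S(2) by simp
  have h10: "h (1,0) = (1,0)" using hv ph(2,3) by simp
  have h01: "h (0,1) - (0,1) = (b, \<delta> - 1)" using hv ph(2,3) by simp
  have "h (h (0,1) - (0,1)) - (h (0,1) - (0,1)) = h (b, \<delta> - 1) - (b, \<delta> - 1)" by (simp only: h01)
  also have "\<dots> = (\<phi> b + b * (\<phi> \<delta> - 1) - b, E)" using hv[of b "\<delta> - 1"] pd by (simp add: E_def)
  finally have "h (h (0,1) - (0,1)) - (h (0,1) - (0,1)) = (\<phi> b + b * (\<phi> \<delta> - 1) - b, E)" .
  then have "\<not> nil2 h" using bb unfolding nil2_def by (metis prod.inject zero_prod_def)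
  then show ?thesis using hH h10 H_add[OF hH] by blast
qed

lemma kappa3:
  assumes "f1 \<in> G" "f2 \<in> G" "f3 \<in> G" "derangement f1" "derangement f2" "derangement f3"
    "conj_class G f1 \<noteq> conj_class G f2" "conj_class G f1 \<noteq> conj_class G f3"
    "conj_class G f2 \<noteq> conj_class G f3"
  shows "3 \<le> kappa (affine_grp H)"
proof -
  let ?K = "{conj_class G g | g. g \<in> G \<and> derangement g}"
  have sub: "{conj_class G f1, conj_class G f2, conj_class G f3} \<subseteq> ?K" using assms by blast
  have "finite ?K" by (rule finite_subset[OF subset_UNIV]) simp
  then have "card {conj_class G f1, conj_class G f2, conj_class G f3} \<le> card ?K"
    using sub card_mono by blast
  then show ?thesis using assms(7-9) unfolding kappa_def G_def[symmetric] by simp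
qed

definition g1 :: "'f \<times> 'f \<Rightarrow> 'f \<times> 'f" where "g1 = (\<lambda>v. v + (1,0))"
definition g2 :: "'f \<times> 'f \<Rightarrow> 'f \<times> 'f" where "g2 = (\<lambda>v. sl2_map 1 1 0 1 v + (0,1))"

lemma t_H: "sl2_map 1 b 0 1 \<in> H" using SL2_H sl2_in[of 1 1 b 0] by auto

lemma g1G: "g1 \<in> G" using G_mem[OF H_id, of "(1,0)"] by (simp add: g1_def id_def)
lemma g2G: "g2 \<in> G" unfolding g2_def by (rule G_mem[OF t_H])
lemma g1d: "derangement g1" by (simp add: g1_def derangement_def prod_eq_iff)
lemma g2d: "derangement g2" by (simp add: g2_def derangement_def prod_eq_iff sl2_map_def split: prod.splits)

lemma class_g1_id: "x \<in> conj_class G g1 \<Longrightarrow> lin x = id"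
  unfolding g1_def by (rule class_transl)

lemma class_g1_nil2: "x \<in> conj_class G g1 \<Longrightarrow> nil2 (lin x)"
  using class_g1_id nil2_id by metis

lemma class_g2_nil2: "x \<in> conj_class G g2 \<Longrightarrow> nil2 (lin x)"
  unfolding g2_def by (rule class_nil2) (auto intro: addf_sl2 nil2_t)

lemma lin_t: "lin (\<lambda>v. sl2_map 1 b 0 1 v + w) = sl2_map 1 b 0 1"
  by (rule lin_aff[OF addf_sl2])

lemma g12: "conj_class G g2 \<noteq> conj_class G g1"
proof (rule class_ne[where P="\<lambda>x. lin x = id", OF g2G class_g1_id])
  show "lin g2 \<noteq> id" unfolding g2_def lin_t by (metis id_apply prod.inject sl2_app mult_1 add_0 zero_neq_one)
qed

lemma t_ne_id: "b \<noteq> 0 \<Longrightarrow> sl2_map 1 b 0 (1::'f) \<noteq> id"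
  by (metis id_apply prod.inject sl2_app mult_1 mult_1_right mult_zero_right add_0 add_0_right)

lemma kappa_ge3:
  assumes q3: "3 \<le> card (UNIV :: 'f set)"
  shows "3 \<le> kappa (affine_grp H)"
proof (cases "\<exists>c\<in>H. dt c \<noteq> 0 \<and> dt c \<noteq> 1")
  case True
  then obtain c where "c \<in> H" "dt c \<noteq> 0" "dt c \<noteq> 1" by blast
  then obtain h where h: "h \<in> H" "addf h" "h (1,0) = (1,0)" "\<not> nil2 h" using case_a by blast
  have ne: "(1,0) \<noteq> (0::'f\<times>'f)" by (simp add: zero_prod_def)
  obtain w where w: "\<forall>v. h v + w \<noteq> v" using exists_w[OF h(2,3) ne] by blast
  define g4 where "g4 = (\<lambda>v. h v + w)"
  have g4G: "g4 \<in> G" unfolding g4_def by (rule G_mem[OF h(1)])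
  have g4d: "derangement g4" using w unfolding g4_def derangement_def by blast
  have lg4: "\<not> nil2 (lin g4)" unfolding g4_def using lin_aff[OF h(2)] h(4) by simp
  have "conj_class G g4 \<noteq> conj_class G g1" by (rule class_ne[where P="\<lambda>x. nil2 (lin x)", OF g4G class_g1_nil2 lg4])
  moreover have "conj_class G g4 \<noteq> conj_class G g2" by (rule class_ne[where P="\<lambda>x. nil2 (lin x)", OF g4G class_g2_nil2 lg4])
  ultimately show ?thesis using kappa3[OF g1G g2G g4G g1d g2d g4d] g12 by (simp add: eq_commute)
next
  case False
  then have dt01: "\<And>c. c \<in> H \<Longrightarrow> dt c = 0 \<or> dt c = 1" by blast
  show ?thesis
  proof (cases "\<exists>l::'f. l * l \<noteq> 0 \<and> l * l \<noteq> 1")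
    case True
    then obtain l :: 'f where l: "l * l \<noteq> 0" "l * l \<noteq> 1" by blast
    define g5 where "g5 = (\<lambda>v. sl2_map 1 1 0 1 v + (0, l))"
    have g5G: "g5 \<in> G" unfolding g5_def by (rule G_mem[OF t_H])
    have g5d: "derangement g5" using l unfolding g5_def derangement_def
      by (auto simp: prod_eq_iff sl2_map_def split: prod.splits)
    have "lin g5 \<noteq> id" unfolding g5_def lin_t by (rule t_ne_id) simp
    then have n1: "conj_class G g5 \<noteq> conj_class G g1" using class_ne[where P="\<lambda>x. lin x = id", OF g5G class_g1_id] by blast
    have n2: "conj_class G g5 \<noteq> conj_class G g2"
    proof
      assume "conj_class G g5 = conj_class G g2"
      then have "g5 \<in> conj_class G g2" using self_conj[OF g5G] by simp
      then obtain c where cH: "c \<in> H" and dc: "dt c = 1 * l * l" using class_b unfolding g5_def g2_def by blast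
      have "dt c = 0 \<or> dt c = 1" using dt01[OF cH] .
      then show False using dc l by simp
    qed
    show ?thesis using kappa3[OF g1G g2G g5G g1d g2d g5d] g12 n1 n2 by (simp add: eq_commute)
  next
    case False
    then have sq: "\<And>l::'f. l * l = 0 \<or> l * l = 1" by blast
    have m1: "- 1 \<noteq> (1::'f)"
    proof
      assume m: "- 1 = (1::'f)"
      have "x \<in> {0, 1}" for x :: 'f
      proof -
        have "x * x = 0 \<or> x * x = 1" using sq by blast
        moreover have "x * x = 1 \<Longrightarrow> (x - 1) * (x + 1) = 0" by (simp add: algebra_simps)
        ultimately have "x = 0 \<or> x = 1 \<or> x = -1" by (auto simp: eq_neg_iff_add_eq_0)
        then show ?thesis using m by auto
      qed
      then have "(UNIV :: 'f set) \<subseteq> {0, 1}" by blast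
      then have "card (UNIV :: 'f set) \<le> card {0, 1::'f}" by (rule card_mono[rotated]) simp
      also have "\<dots> \<le> 2" by (simp add: card_insert_le_m1)
      finally show False using q3 by simp
    qed
    define g5 where "g5 = (\<lambda>v. sl2_map 1 (-1) 0 1 v + (0, 1::'f))"
    have g5G: "g5 \<in> G" unfolding g5_def by (rule G_mem[OF t_H])
    have g5d: "derangement g5" unfolding g5_def derangement_def
      by (auto simp: prod_eq_iff sl2_map_def split: prod.splits)
    have "lin g5 \<noteq> id" unfolding g5_def lin_t by (rule t_ne_id) simp
    then have n1: "conj_class G g5 \<noteq> conj_class G g1" using class_ne[where P="\<lambda>x. lin x = id", OF g5G class_g1_id] by blast
    have n2: "conj_class G g5 \<noteq> conj_class G g2"
    proof
      assume "conj_class G g5 = conj_class G g2"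
      then have "g5 \<in> conj_class G g2" using self_conj[OF g5G] by simp
      then obtain c where cH: "c \<in> H" and dc: "dt c = (-1) * 1 * 1" using class_b unfolding g5_def g2_def by blast
      have "dt c = 0 \<or> dt c = 1" using dt01[OF cH] .
      then show False using dc m1 by simp
    qed
    show ?thesis using kappa3[OF g1G g2G g5G g1d g2d g5d] g12 n1 n2 by (simp add: eq_commute)
  qed
qed

lemma card_G: "3 * (card (UNIV :: 'f set) * card (UNIV :: 'f set)) \<le> card G"
proof -
  define s :: "nat \<Rightarrow> 'f \<times> 'f \<Rightarrow> 'f \<times> 'f" where
    "s i = (if i = 0 then sl2_map 1 0 0 1 else if i = 1 then sl2_map 1 1 0 1 else sl2_map 1 0 1 1)" for i
  define F where "F p = (\<lambda>v. s (fst p) v + snd p)" for p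
  have sH: "s i \<in> H" for i unfolding s_def using t_H SL2_H sl2_in[of 1 1 1 0] sl2_in[of 1 1 0 1] by auto
  have FG: "F ` ({0,1,2} \<times> UNIV) \<subseteq> G" unfolding F_def using G_mem[OF sH] by auto
  have inj: "inj_on F ({0,1,2} \<times> UNIV)"
  proof (rule inj_onI)
    fix p p' assume p: "p \<in> {0::nat,1,2} \<times> UNIV" "p' \<in> {0::nat,1,2} \<times> UNIV" and e: "F p = F p'"
    have "F p 0 = F p' 0" using e by simp
    moreover have "s i 0 = 0" for i by (simp add: s_def)
    ultimately have w: "snd p = snd p'" unfolding F_def by simp
    have "F p (1,0) = F p' (1,0)" "F p (0,1) = F p' (0,1)" using e by simp_all
    then have "s (fst p) (1,0) = s (fst p') (1,0)" "s (fst p) (0,1) = s (fst p') (0,1)"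
      unfolding F_def using w by simp_all
    then have "fst p = fst p'" using p by (auto simp: s_def sl2_app)
    then show "p = p'" using w by (simp add: prod_eq_iff)
  qed
  have c2: "card (UNIV :: ('f \<times> 'f) set) = card (UNIV :: 'f set) * card (UNIV :: 'f set)"
    by (simp add: card_cartesian_product UNIV_Times_UNIV[symmetric] del: UNIV_Times_UNIV)
  have c1: "card ({0::nat,1,2} \<times> (UNIV :: ('f \<times> 'f) set)) = 3 * card (UNIV :: ('f \<times> 'f) set)"
    by (simp add: card_cartesian_product)
  have "3 * (card (UNIV :: 'f set) * card (UNIV :: 'f set)) = card (F ` ({0,1,2} \<times> UNIV))"
    using card_image[OF inj] c1 c2 by simp
  also have "\<dots> \<le> card G" by (rule card_mono[OF _ FG]) simp
  finally show ?thesis .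
qed

lemma iso_card: "perm_grp G \<cong> sym_group 4 \<Longrightarrow> card G = 24"
proof -
  assume "perm_grp G \<cong> sym_group 4"
  then obtain f where "bij_betw f G {p. p permutes {1..4::nat}}"
    unfolding is_iso_def iso_def perm_grp_def sym_group_def by auto
  then have "card G = card {p. p permutes {1..4::nat}}" by (rule bij_betw_same_card)
  also have "\<dots> = fact 4" by (rule card_permutations) simp_all
  finally show ?thesis by (simp add: fact_numeral)
qed

lemma transl_conj: assumes "w \<noteq> 0" shows "(\<lambda>v. v + w) \<in> conj_class G g1"
proof -
  obtain w1 w2 where ww: "w = (w1, w2)" by fastforce
  have "\<exists>S\<in>SL2. S (1,0) = w"
  proof (cases "w1 = 0")
    case False
    have "sl2_map w1 0 w2 (1/w1) \<in> SL2" by (rule sl2_in) (use False in simp)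
    moreover have "sl2_map w1 0 w2 (1/w1) (1,0) = w" using ww by (simp add: sl2_app)
    ultimately show ?thesis by blast
  next
    case True
    then have w2: "w2 \<noteq> 0" using assms ww by (simp add: zero_prod_def)
    have "sl2_map 0 (-1/w2) w2 0 \<in> SL2" by (rule sl2_in) (use w2 in simp)
    moreover have "sl2_map 0 (-1/w2) w2 0 (1,0) = w" using ww True by (simp add: sl2_app)
    ultimately show ?thesis by blast
  qed
  then obtain S where S: "S \<in> SL2" "S (1,0) = w" by blast
  have SG: "S \<in> G" using G_mem[of S 0] S(1) SL2_H by auto
  have "(\<lambda>v. v + w) \<circ> S = S \<circ> g1"
  proof
    fix v show "((\<lambda>v. v + w) \<circ> S) v = (S \<circ> g1) v"
      using mat_add[OF SL2_mat[OF S(1)], of v "(1,0)"] S(2) by (simp add: g1_def)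
  qed
  then show ?thesis by (rule conj_intro[OF SG])
qed

end

lemma F2_univ:
  assumes "card (UNIV :: 'f::{field,finite} set) = 2"
  shows "\<And>x::'f. x = 0 \<or> x = 1" "(1::'f) + 1 = 0"
proof -
  have sub: "{0, 1::'f} \<subseteq> UNIV" by simp
  have "card {0, 1::'f} = 2" by simp
  then have U: "{0, 1::'f} = UNIV" using card_subset_eq[OF finite_UNIV sub] assms by simp
  then show "\<And>x::'f. x = 0 \<or> x = 1" by blast
  have "(1::'f) + 1 \<in> {0, 1}" using U by simp
  moreover have "(1::'f) + 1 \<noteq> 1" by (metis add_cancel_right_right one_neq_zero)
  ultimately show "(1::'f) + 1 = 0" by blast
qed

lemma F2facts:
  assumes "(1::'f::field) + 1 = 0"
  shows "(2::'f) = 0" "(3::'f) = 1" "(4::'f) = 0" "-(1::'f) = 1" "-(2::'f) = 0" "-(3::'f) = 1" "(5::'f) = 1"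
proof -
  show t: "(2::'f) = 0" using assms by simp
  have "(3::'f) = 2 + 1" by simp
  then show t3: "(3::'f) = 1" using t by simp
  have "(4::'f) = 2 + 2" by simp
  then show "(4::'f) = 0" using t by simp
  have "(5::'f) = 2 + 2 + 1" by simp
  then show "(5::'f) = 1" using t by simp
  show m: "-(1::'f) = 1" using assms by (simp add: eq_neg_iff_add_eq_0)
  show "-(2::'f) = 0" using t by simp
  show "-(3::'f) = 1" using t3 m by simp
qed

lemma BF1:
  fixes a b c d w1 w2 :: "'f::field"
  assumes F: "\<And>x::'f. x = 0 \<or> x = 1" "(1::'f) + 1 = 0"
    and bij: "a * d - b * c \<noteq> 0" and nid: "\<not>(a=1 \<and> b=0 \<and> c=0 \<and> d=1)"
    and der: "\<And>x y. (a * x+b * y+w1, c * x+d * y+w2) \<noteq> (x,y)"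
  shows "a * (a * w1+b * w2-w1) + b * (c * w1+d * w2-w2) = a * w1+b * w2-w1 \<and> c * (a * w1+b * w2-w1) + d * (c * w1+d * w2-w2) = c * w1+d * w2-w2 \<and> (a * w1+b * w2-w1) * w2 - w1 * (c * w1+d * w2-w2) = 1"
proof -
  note ff = F2facts[OF F(2)]
  have d00: "(a * 0+b * 0+w1, c * 0+d * 0+w2) \<noteq> (0,0)" and d10: "(a * 1+b * 0+w1, c * 1+d * 0+w2) \<noteq> (1,0)"
    and d01: "(a * 0+b * 1+w1, c * 0+d * 1+w2) \<noteq> (0,1)" and d11: "(a * 1+b * 1+w1, c * 1+d * 1+w2) \<noteq> (1,1)"
    using der by blast+
  show ?thesis using F(1)[of a] F(1)[of b] F(1)[of c] F(1)[of d] F(1)[of w1] F(1)[of w2] bij nid d00 d10 d01 d11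
    by (elim disjE) (simp_all add: ff)
qed

lemma BF2:
  fixes p1 p2 r1 r2 s1 s2 :: "'f::field"
  assumes F: "\<And>x::'f. x = 0 \<or> x = 1" "(1::'f) + 1 = 0"
    and ne: "(p1,p2) \<noteq> (0,0)" "(r1,r2) \<noteq> (0,0)" "(s1,s2) \<noteq> (0,0)"
     "(p1,p2) \<noteq> (r1,r2)" "(p1,p2) \<noteq> (s1,s2)" "(r1,r2) \<noteq> (s1,s2)"
  shows "s1 = p1 + r1 \<and> s2 = p2 + r2 \<and> p1 * r2 - r1 * p2 = 1"
proof -
  note ff = F2facts[OF F(2)]
  show ?thesis using F(1)[of p1] F(1)[of p2] F(1)[of r1] F(1)[of r2] F(1)[of s1] F(1)[of s2] ne
    by (elim disjE) (simp_all add: ff)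
qed

lemma F2_mat:
  fixes h :: "'f::field \<times> 'f \<Rightarrow> 'f \<times> 'f"
  assumes F: "\<And>x::'f. x = 0 \<or> x = 1" and ah: "addf h"
  shows "h = sl2_map (fst (h (1,0))) (fst (h (0,1))) (snd (h (1,0))) (snd (h (0,1)))"
proof
  fix v :: "'f \<times> 'f"
  obtain x y where v: "v = (x, y)" by fastforce
  have h0: "h (0,0) = (0,0)" using addf_0[OF ah] by (simp add: zero_prod_def)
  have h11: "h (1,1) = h (1,0) + h (0,1)" using addf_add[OF ah, of "(1,0)" "(0,1)"] by simp
  show "h v = sl2_map (fst (h (1,0))) (fst (h (0,1))) (snd (h (1,0))) (snd (h (0,1))) v"
    using F[of x] F[of y] h0 h11 unfolding v by (elim disjE) (simp_all add: sl2_app prod_eq_iff)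
qed

lemma inj_ne_F2:
  fixes h :: "'f::field \<times> 'f \<Rightarrow> 'f \<times> 'f"
  assumes "inj h" "h (0,0) = (0,0)"
  shows "h (1,0) \<noteq> (0,0)" "h (0,1) \<noteq> (0,0)" "h (1,1) \<noteq> (0,0)"
    "h (1,0) \<noteq> h (0,1)" "h (1,0) \<noteq> h (1,1)" "h (0,1) \<noteq> h (1,1)"
  using assms by (metis injD prod.inject zero_neq_one)+

context aff begin

lemma der_q2:
  assumes q2: "card (UNIV :: 'f set) = 2" and g: "g \<in> G" "derangement g"
  shows "conj_class G g = conj_class G g1 \<or> conj_class G g = conj_class G g2"
proof -
  note F = F2_univ[OF q2]
  obtain h w where h: "h \<in> H" and gh: "g = (\<lambda>v. h v + w)" using G_form[OF g(1)] by blast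
  have ah: "addf h" and bh: "bij h" using H_GL[OF h] by auto
  define a where "a = fst (h (1,0))"
  define b where "b = fst (h (0,1))"
  define c where "c = snd (h (1,0))"
  define d where "d = snd (h (0,1))"
  have hm: "h = sl2_map a b c d" unfolding a_def b_def c_def d_def by (rule F2_mat[OF F(1) ah])
  obtain w1 w2 where ww: "w = (w1, w2)" by fastforce
  have der: "(a * x + b * y + w1, c * x + d * y + w2) \<noteq> (x, y)" for x y
    using g(2) unfolding derangement_def gh hm ww by (simp add: sl2_app)
  show ?thesis
  proof (cases "a = 1 \<and> b = 0 \<and> c = 0 \<and> d = 1")
    case True
    then have "h = id" using hm by (auto simp: sl2_map_def fun_eq_iff)
    then have gw: "g = (\<lambda>v. v + w)" using gh by simp
    have "w \<noteq> 0" using der[of 0 0] ww by (auto simp: zero_prod_def)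
    then have "g \<in> conj_class G g1" using transl_conj gw by simp
    then show ?thesis using conj_trans g1G by blast
  next
    case False
    have h00: "h (0,0) = (0,0)" using addf_0[OF ah] by (simp add: zero_prod_def)
    have h11: "h (1,1) = h (1,0) + h (0,1)" using addf_add[OF ah, of "(1,0)" "(0,1)"] by simp
    note ne = inj_ne_F2[OF bij_is_inj[OF bh] h00]
    have p: "h (1,0) = (a, c)" and r: "h (0,1) = (b, d)" by (simp_all add: a_def b_def c_def d_def)
    obtain s1 s2 where sv: "h (1,1) = (s1, s2)" by fastforce
    have "s1 = a + b \<and> s2 = c + d \<and> a * d - b * c = 1"
      by (rule BF2[OF F]) (use ne p r sv in auto)
    then have det: "a * d - b * c \<noteq> 0" by simp
    have bf: "a * (a * w1 + b * w2 - w1) + b * (c * w1 + d * w2 - w2) = a * w1 + b * w2 - w1 \<and>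
      c * (a * w1 + b * w2 - w1) + d * (c * w1 + d * w2 - w2) = c * w1 + d * w2 - w2 \<and>
      (a * w1 + b * w2 - w1) * w2 - w1 * (c * w1 + d * w2 - w2) = 1"
      by (rule BF1[OF F det False der])
    define z1 where "z1 = a * w1 + b * w2 - w1"
    define z2 where "z2 = c * w1 + d * w2 - w2"
    have e1: "a * z1 + b * z2 = z1" and e2: "c * z1 + d * z2 = z2" and e3: "z1 * w2 - w1 * z2 = 1"
      using bf unfolding z1_def z2_def by auto
    define C where "C = sl2_map z1 w1 z2 w2"
    have CS: "C \<in> SL2" unfolding C_def by (rule sl2_in[OF e3])
    have CG: "C \<in> G" using G_mem[of C 0] CS SL2_H by auto
    have "g \<circ> C = C \<circ> g2"
    proof
      fix v :: "'f \<times> 'f"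
      obtain x y where v: "v = (x, y)" by fastforce
      have l1: "a * (z1 * x + w1 * y) + b * (z2 * x + w2 * y) + w1 = z1 * (x + y) + w1 * (y + 1)"
        using e1 z1_def by Groebner_Basis.algebra
      have l2: "c * (z1 * x + w1 * y) + d * (z2 * x + w2 * y) + w2 = z2 * (x + y) + w2 * (y + 1)"
        using e2 z2_def by Groebner_Basis.algebra
      show "(g \<circ> C) v = (C \<circ> g2) v"
        unfolding v gh hm ww C_def g2_def using l1 l2 by (simp add: sl2_app)
    qed
    then have "g \<in> conj_class G g2" by (rule conj_intro[OF CG])
    then show ?thesis using conj_trans g2G by blast
  qed
qed

lemma kappa_q2:
  assumes q2: "card (UNIV :: 'f set) = 2"
  shows "kappa (affine_grp H) = 2"
proof -
  have "{conj_class G g | g. g \<in> G \<and> derangement g} = {conj_class G g1, conj_class G g2}"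
  proof
    show "{conj_class G g | g. g \<in> G \<and> derangement g} \<subseteq> {conj_class G g1, conj_class G g2}"
      using der_q2[OF q2] by blast
    show "{conj_class G g1, conj_class G g2} \<subseteq> {conj_class G g | g. g \<in> G \<and> derangement g}"
      using g1G g2G g1d g2d by blast
  qed
  then show ?thesis unfolding kappa_def G_def[symmetric] using g12 by simp
qed

lemma allbij_q2:
  assumes q2: "card (UNIV :: 'f set) = 2"
  shows "G = {f. bij f}"
proof
  show "G \<subseteq> {f. bij f}" using G_bij by blast
  show "{f. bij f} \<subseteq> G"
  proof
    fix f :: "'f \<times> 'f \<Rightarrow> 'f \<times> 'f" assume "f \<in> {f. bij f}"
    then have bf: "bij f" by simp
    note F = F2_univ[OF q2]
    define h where "h v = f v - f 0" for v
    have ih: "inj h" using bij_is_inj[OF bf] unfolding h_def inj_def by simp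
    have h00: "h (0,0) = (0,0)" by (simp add: h_def zero_prod_def)
    note ne = inj_ne_F2[OF ih h00]
    obtain p1 p2 where p: "h (1,0) = (p1, p2)" by fastforce
    obtain r1 r2 where r: "h (0,1) = (r1, r2)" by fastforce
    obtain s1 s2 where sv: "h (1,1) = (s1, s2)" by fastforce
    have bf2: "s1 = p1 + r1 \<and> s2 = p2 + r2 \<and> p1 * r2 - r1 * p2 = 1"
      by (rule BF2[OF F]) (use ne p r sv in auto)
    have hm: "h = sl2_map p1 r1 p2 r2"
    proof
      fix v :: "'f \<times> 'f"
      obtain x y where v: "v = (x, y)" by fastforce
      show "h v = sl2_map p1 r1 p2 r2 v"
        using F(1)[of x] F(1)[of y] h00 p r sv bf2 unfolding v by (elim disjE) (simp_all add: sl2_app)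
    qed
    have "sl2_map p1 r1 p2 r2 \<in> SL2" using bf2 by (intro sl2_in) simp
    then have "h \<in> H" using hm SL2_H by auto
    moreover have "f = (\<lambda>v. h v + f 0)" by (simp add: h_def)
    ultimately show "f \<in> G" using G_mem by metis
  qed
qed

lemma iso_q2:
  assumes q2: "card (UNIV :: 'f set) = 2"
  shows "perm_grp G \<cong> sym_group 4"
proof -
  have c4: "card (UNIV :: ('f \<times> 'f) set) = 4"
    using q2 by (simp add: card_cartesian_product UNIV_Times_UNIV[symmetric] del: UNIV_Times_UNIV)
  obtain \<beta> :: "nat \<Rightarrow> 'f \<times> 'f" where \<beta>: "bij_betw \<beta> {1..4} UNIV"
    using ex_bij_betw_nat_finite_1[of "UNIV :: ('f \<times> 'f) set"] c4 by auto
  define \<gamma> where "\<gamma> = inv_into {1..4} \<beta>"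
  have \<gamma>b: "bij_betw \<gamma> UNIV {1..4}" unfolding \<gamma>_def by (rule bij_betw_inv_into[OF \<beta>])
  have bg: "\<beta> (\<gamma> v) = v" for v unfolding \<gamma>_def using bij_betw_inv_into_right[OF \<beta>] by simp
  have gb: "\<gamma> (\<beta> i) = i" if "i \<in> {1..4}" for i
    unfolding \<gamma>_def using bij_betw_inv_into_left[OF \<beta> that] .
  have gin: "\<gamma> v \<in> {1..4}" for v using \<gamma>b by (meson UNIV_I bij_betwE)
  define \<psi> where "\<psi> f = (\<lambda>i. if i \<in> {1..4} then \<gamma> (f (\<beta> i)) else i)" for f :: "'f \<times> 'f \<Rightarrow> 'f \<times> 'f"
  have perm: "\<psi> f permutes {1..4}" if bf: "bij f" for f
  proof (rule bij_imp_permutes)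
    have "bij_betw (\<gamma> \<circ> f \<circ> \<beta>) {1..4} {1..4}"
      using bij_betw_trans[OF bij_betw_trans[OF \<beta> bf] \<gamma>b] by (simp add: o_assoc)
    then show "bij_betw (\<psi> f) {1..4} {1..4}"
      by (rule bij_betw_cong[THEN iffD1, rotated]) (simp add: \<psi>_def)
    show "\<And>x. x \<notin> {1..4} \<Longrightarrow> \<psi> f x = x" unfolding \<psi>_def by auto
  qed
  have hom: "\<psi> (f \<circ> g) = \<psi> f \<circ> \<psi> g" for f g
  proof
    fix i show "\<psi> (f \<circ> g) i = (\<psi> f \<circ> \<psi> g) i"
      using gin[of "g (\<beta> i)"] by (auto simp: \<psi>_def bg)
  qed
  have inj: "inj_on \<psi> G"
  proof (rule inj_onI)
    fix f g assume "f \<in> G" "g \<in> G" and e: "\<psi> f = \<psi> g"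
    show "f = g"
    proof
      fix v
      have "\<gamma> (f (\<beta> (\<gamma> v))) = \<gamma> (g (\<beta> (\<gamma> v)))" using fun_cong[OF e, of "\<gamma> v"] gin[of v] by (simp add: \<psi>_def)
      then have "\<beta> (\<gamma> (f v)) = \<beta> (\<gamma> (g v))" by (simp add: bg)
      then show "f v = g v" by (simp add: bg)
    qed
  qed
  have img: "\<psi> ` G = {p. p permutes {1..4}}"
  proof
    show "\<psi> ` G \<subseteq> {p. p permutes {1..4}}" using perm allbij_q2[OF q2] by auto
    show "{p. p permutes {1..4}} \<subseteq> \<psi> ` G"
    proof
      fix p assume "p \<in> {p. p permutes {1..(4::nat)}}"
      then have pp: "p permutes {1..4}" by simp
      define f where "f = \<beta> \<circ> p \<circ> \<gamma>"
      have "bij_betw f UNIV UNIV"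
        unfolding f_def using bij_betw_trans[OF bij_betw_trans[OF \<gamma>b permutes_imp_bij[OF pp]] \<beta>]
        by (simp add: o_assoc)
      then have fG: "f \<in> G" using allbij_q2[OF q2] by simp
      have "\<psi> f = p"
      proof
        fix i show "\<psi> f i = p i"
          using gb permutes_in_image[OF pp] permutes_not_in[OF pp] by (auto simp: \<psi>_def f_def)
      qed
      then show "p \<in> \<psi> ` G" using fG by blast
    qed
  qed
  have "\<psi> \<in> iso (perm_grp G) (sym_group 4)"
    unfolding iso_def hom_def perm_grp_def sym_group_def
    using perm allbij_q2[OF q2] hom inj img by (auto simp: bij_betw_def)
  then show ?thesis unfolding is_iso_def by blast
qed

end

theorem proposition4p8:
  fixes H :: "(('f::{field,finite} \<times> 'f) \<Rightarrow> ('f \<times> 'f)) set"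
    and p k :: nat
  assumes "Factorial_Ring.prime p"
    and "card (UNIV :: 'f set) ^ 2 = p ^ k"
    and "subgroup H (perm_grp GL_V)"
    and "SL2 \<lhd> perm_grp H"
    and "two_transitive (affine_grp H)"
    and "\<not> frobenius (affine_grp H)"
  shows "kappa (affine_grp H) = 2 \<longleftrightarrow> perm_grp (affine_grp H) \<cong> sym_group 4"
proof -
  interpret aff H by (rule aff.intro[OF assms(3) assms(4)])
  have "card {0, 1::'f} \<le> card (UNIV :: 'f set)" by (rule card_mono) simp_all
  then have q2: "2 \<le> card (UNIV :: 'f set)" by simp
  show ?thesis
  proof (cases "card (UNIV :: 'f set) = 2")
    case True
    show ?thesis using kappa_q2[OF True] iso_q2[OF True] unfolding G_def by simp
  next
    case False
    then have q3: "3 \<le> card (UNIV :: 'f set)" using q2 by simp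
    have k: "kappa (affine_grp H) \<noteq> 2" using kappa_ge3[OF q3] by simp
    have "\<not> perm_grp G \<cong> sym_group 4"
    proof
      assume "perm_grp G \<cong> sym_group 4"
      then have "card G = 24" by (rule iso_card)
      moreover have "3 * (3 * 3) \<le> 3 * (card (UNIV :: 'f set) * card (UNIV :: 'f set))"
        using q3 by (intro mult_le_mono2 mult_le_mono) simp_all
      ultimately show False using card_G by simp
    qed
    then show ?thesis using k unfolding G_def by simp
  qed
qed

end
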